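(* Let $p>3$ be a prime. Then $S_p\equiv 4+8(-1)^{\frac{p-1}{2}}p^2E_{p-3}\pmod{p^3}$, $S_{2p}\equiv 20+128(-1)^{\frac{p-1}{2}}p^2E_{p-3}\pmod{p^3}$, and $S_{3p}\equiv 112+1440(-1)^{\frac{p-1}{2}}p^2E_{p-3}\pmod{p^3}$.
   Context: $(S_n)_{n\ge0}$ is the integer sequence defined by $S_0=1$, $S_1=4$ and $(n+1)^2S_{n+1}=4(3n^2+3n+1)S_n-32n^2S_{n-1}$ for $n\ge1$; equivalently $S_n=\sum_{k=0}^n\binom nk\binom{2k}k\binom{2n-2k}{n-k}$. The Euler numbers $E_n$ are defined by $E_0=1$, $E_{2n-1}=0$ and $\sum_{k=0}^n\binom{2n}{2k}E_{2k}=0$ for $n\ge1$. *)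

theory Defs
  imports "HOL-Number_Theory.Cong"
begin

definition S :: "nat \<Rightarrow> int" where
  "S n = (\<Sum>k\<le>n. int (n choose k) * int ((2*k) choose k) * int ((2*n - 2*k) choose (n - k)))"

(* Euler numbers at even index: E2 n = E_{2n}, via E_0 = 1 and
   sum_{k=0}^n binom(2n,2k) E_{2k} = 0 for n >= 1 *)
fun E2 :: "nat \<Rightarrow> int" where
  "E2 n = (if n = 0 then 1 else - (\<Sum>k<n. int ((2*n) choose (2*k)) * E2 k))"

definition euler :: "nat \<Rightarrow> int" where
  "euler n = (if even n then E2 (n div 2) else 0)"

end

theory Submission
  imports Defs "HOL-Number_Theory.Number_Theory"
begin
lemma wil_step:
  fixes p m :: nat
  assumes "prime p" "1 \<le> m" "m \<le> p - 1"
  shows "[fact (p - m) * fact (m - 1) = ((-1)^m :: int)] (mod int p)"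
  using assms(2,3)
proof (induction m rule: dec_induct)
  case base
  then show ?case using wilson_theorem[OF assms(1)] by simp
next
  case (step m)
  have e: "p - m = Suc (p - Suc m)" using step by simp
  have "fact (p - m) = (int p - int m) * (fact (p - Suc m) :: int)"
    using step by (subst e, simp add: of_nat_diff)
  with step.IH have h: "[(int p - int m) * fact (p - Suc m) * fact (m - 1) = ((-1)^m :: int)] (mod int p)"
    using step by simp
  have "[(int p - int m) * fact (p - Suc m) * fact (m - 1) = (- int m) * fact (p - Suc m) * (fact (m - 1) :: int)] (mod int p)"
    by (intro cong_mult cong_refl) (simp add: cong_iff_dvd_diff)
  from cong_trans[OF cong_sym[OF this] h] have "[- (fact (p - Suc m) * (int m * fact (m - 1))) = - ((-1::int)^(Suc m))] (mod int p)"
    by (simp add: algebra_simps)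
  then have "[fact (p - Suc m) * (int m * fact (m - 1)) = (-1::int)^(Suc m)] (mod int p)"
    using cong_minus_minus_iff by blast
  moreover have "int m * fact (m - 1) = (fact m :: int)" using step
    by (simp add: fact_reduce)
  ultimately show ?case by simp
qed

lemma wil_refl:
  fixes p m :: nat
  assumes "prime p" "1 \<le> m" "m \<le> p - 1"
  shows "[fact m * fact (p - m) = ((-1)^m * int m :: int)] (mod int p)"
proof -
  have c: "[int m * (fact (p - m) * fact (m - 1)) = int m * ((-1)^m :: int)] (mod int p)"
    by (rule cong_scalar_left[OF wil_step[OF assms]])
  have eq: "int m * (fact (p - m) * fact (m - 1)) = (fact m * fact (p - m) :: int)"
    using assms fact_reduce[of m, where 'a=int] by simp
  show ?thesis using c unfolding eq by (simp add: mult.commute)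
qed

lemma powsum_double:
  fixes p m :: nat
  assumes "prime p" "p > 2"
  shows "[(\<Sum>t\<in>{1..p-1}. t^m) = 2^m * (\<Sum>t\<in>{1..p-1}. t^m)] (mod p)"
proof -
  define f where "f t = (2*t) mod p" for t
  have cop2: "coprime 2 p" using assms
    by (metis prime_nat_iff primes_coprime_nat two_is_prime_nat coprime_commute prime_imp_coprime_nat less_not_refl)
  have inj: "inj_on f {1..p-1}"
  proof
    fix x y assume x: "x \<in> {1..p-1}" and y: "y \<in> {1..p-1}" and "f x = f y"
    then have "[2*x = 2*y] (mod p)" by (simp add: f_def cong_def)
    then have "[x = y] (mod p)" using cop2 by (metis cong_mult_lcancel_nat)
    moreover have "x < p" "y < p" using x y assms by auto
    ultimately show "x = y" by (simp add: cong_def)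
  qed
  have sub: "f ` {1..p-1} \<subseteq> {1..p-1}"
  proof
    fix z assume "z \<in> f ` {1..p-1}"
    then obtain x where x: "x \<in> {1..p-1}" "z = (2*x) mod p" by (auto simp: f_def)
    have "\<not> p dvd 2*x"
    proof
      assume "p dvd 2*x"
      then have "p dvd 2 \<or> p dvd x" using assms(1) prime_dvd_mult_nat by blast
      then show False using x assms by (auto dest: dvd_imp_le)
    qed
    then have "z \<noteq> 0" using x by (auto simp: mod_eq_0_iff_dvd)
    moreover have "z < p" using x assms by simp
    ultimately show "z \<in> {1..p-1}" by auto
  qed
  have im: "f ` {1..p-1} = {1..p-1}"
    by (rule endo_inj_surj[OF _ sub inj]) simp
  have "(\<Sum>t\<in>{1..p-1}. t^m) = (\<Sum>t\<in>f ` {1..p-1}. t^m)" by (simp only: im)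
  also have "\<dots> = (\<Sum>t\<in>{1..p-1}. (f t)^m)" using sum.reindex[OF inj, of "\<lambda>t. t^m"] by (simp add: comp_def)
  finally have e: "(\<Sum>t\<in>{1..p-1}. t^m) = (\<Sum>t\<in>{1..p-1}. (f t)^m)" .
  have "[(\<Sum>t\<in>{1..p-1}. (f t)^m) = (\<Sum>t\<in>{1..p-1}. (2*t)^m)] (mod p)"
    by (intro cong_sum cong_pow) (simp add: f_def cong_def)
  also have "(\<Sum>t\<in>{1..p-1}. (2*t)^m) = 2^m * (\<Sum>t\<in>{1..p-1}. t^m)"
    by (simp add: power_mult_distrib sum_distrib_left)
  finally show ?thesis using e by simp
qed

lemma fermat_int:
  fixes p a :: nat
  assumes "prime p" "\<not> p dvd a"
  shows "[int a ^ (p - 1) = 1] (mod int p)"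
  using fermat_theorem[OF assms] by (metis cong_int_iff of_nat_1 of_nat_power)

lemma p_dvd3S:
  fixes p S :: nat
  assumes "prime p" "p > 3" "p dvd 3 * S"
  shows "p dvd S"
proof -
  have "p dvd 3 \<or> p dvd S" using assms prime_dvd_mult_nat by blast
  then show ?thesis using assms by (auto dest: dvd_imp_le)
qed

lemma powsum_zero:
  fixes p :: nat
  assumes "prime p" "p > 3"
  shows "[(\<Sum>t\<in>{1..p-1}. t^(p-3)) = 0] (mod p)"
proof -
  define S where "S = (\<Sum>t\<in>{1..p-1}. t^(p-3))"
  have h: "[S = 2^(p-3) * S] (mod p)" unfolding S_def by (rule powsum_double) (use assms in auto)
  have "[4 * S = 4 * (2^(p-3) * S)] (mod p)" by (rule cong_scalar_left[OF h])
  moreover have "4 * (2^(p-3) * S) = 2^(p-1) * S"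
  proof -
    have "p - 1 = Suc (Suc (p - 3))" using assms by simp
    then show ?thesis by simp
  qed
  moreover have "[2^(p-1) * S = 1 * S] (mod p)"
    by (rule cong_scalar_right, rule fermat_theorem) (use assms in \<open>auto dest: dvd_imp_le\<close>)
  ultimately have "[4 * S = S] (mod p)" by (metis cong_trans mult_1)
  then have "[3 * S + S = 0 + S] (mod p)" by simp
  then have "[3 * S = 0] (mod p)" using cong_add_rcancel_nat by blast
  then have "p dvd 3 * S" by (simp add: cong_0_iff)
  then have "p dvd S" by (rule p_dvd3S[OF assms])
  then show ?thesis unfolding S_def by (simp add: cong_0_iff)
qed

lemma sum_reflect:
  fixes g :: "nat \<Rightarrow> 'a::comm_monoid_add"
  assumes "p = 2*h+1"
  shows "(\<Sum>t\<in>{h+1..p-1}. g t) = (\<Sum>t\<in>{1..h}. g (p - t))"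
  by (rule sum.reindex_bij_witness[of _ "\<lambda>t. p - t" "\<lambda>t. p - t"]) (use assms in auto)

lemma prod_reflect:
  fixes g :: "nat \<Rightarrow> 'a::comm_monoid_mult"
  assumes "p = 2*h+1"
  shows "(\<Prod>t\<in>{h+1..p-1}. g t) = (\<Prod>t\<in>{1..h}. g (p - t))"
  by (rule prod.reindex_bij_witness[of _ "\<lambda>t. p - t" "\<lambda>t. p - t"]) (use assms in auto)

lemma split_half:
  fixes p h :: nat
  assumes "p = 2*h+1"
  shows "{1..p-1} = {1..h} \<union> {h+1..p-1}" "{1..h} \<inter> {h+1..p-1} = {}"
  using assms by auto

lemma sum_split_half:
  fixes g :: "nat \<Rightarrow> 'a::comm_monoid_add"
  assumes "p = 2*h+1"
  shows "(\<Sum>t\<in>{1..p-1}. g t) = (\<Sum>t\<in>{1..h}. g t + g (p - t))"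
proof -
  have "(\<Sum>t\<in>{1..p-1}. g t) = (\<Sum>t\<in>{1..h}. g t) + (\<Sum>t\<in>{h+1..p-1}. g t)"
    unfolding split_half(1)[OF assms] by (rule sum.union_disjoint) (use assms in auto)
  then show ?thesis by (simp only: sum.distrib sum_reflect[OF assms])
qed

lemma prod_split_half:
  fixes g :: "nat \<Rightarrow> 'a::comm_monoid_mult"
  assumes "p = 2*h+1"
  shows "(\<Prod>t\<in>{1..p-1}. g t) = (\<Prod>t\<in>{1..h}. g t * g (p - t))"
proof -
  have "(\<Prod>t\<in>{1..p-1}. g t) = (\<Prod>t\<in>{1..h}. g t) * (\<Prod>t\<in>{h+1..p-1}. g t)"
    unfolding split_half(1)[OF assms] by (rule prod.union_disjoint) (use assms in auto)
  then show ?thesis by (simp only: prod.distrib prod_reflect[OF assms])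
qed

lemma p_odd_h:
  fixes p :: nat
  assumes "prime p" "p > 3"
  shows "p = 2 * ((p - 1) div 2) + 1"
proof -
  have "odd p" using assms prime_odd_nat by auto
  then show ?thesis by presburger
qed

lemma halfsum_zero:
  fixes p :: nat
  assumes "prime p" "p > 3"
  shows "[(\<Sum>t\<in>{1..(p-1) div 2}. int t^(p-3)) = 0] (mod int p)"
proof -
  define h where "h = (p-1) div 2"
  have ph: "p = 2*h+1" unfolding h_def by (rule p_odd_h[OF assms])
  have ev: "even (p - 3)" using ph by presburger
  have "[int (\<Sum>t\<in>{1..p-1}. t^(p-3)) = int 0] (mod int p)"
    using powsum_zero[OF assms] cong_int_iff by blast
  then have A: "[(\<Sum>t\<in>{1..p-1}. int t^(p-3)) = 0] (mod int p)" by simp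
  have "(\<Sum>t\<in>{1..p-1}. int t^(p-3)) = (\<Sum>t\<in>{1..h}. int t^(p-3) + int (p - t)^(p-3))"
    by (rule sum_split_half[OF ph])
  moreover have "[(\<Sum>t\<in>{1..h}. int t^(p-3) + int (p - t)^(p-3)) = (\<Sum>t\<in>{1..h}. int t^(p-3) + (- int t)^(p-3))] (mod int p)"
  proof (intro cong_sum cong_add cong_refl cong_pow)
    fix t assume "t \<in> {1..h}"
    then have "int (p - t) = int p - int t" using ph by auto
    then show "[int (p - t) = - int t] (mod int p)" by (simp add: cong_iff_dvd_diff)
  qed
  moreover have "(\<Sum>t\<in>{1..h}. int t^(p-3) + (- int t)^(p-3)) = 2 * (\<Sum>t\<in>{1..h}. int t^(p-3))"
    using ev by (simp add: sum_distrib_left)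
  ultimately have "[2 * (\<Sum>t\<in>{1..h}. int t^(p-3)) = 2 * 0] (mod int p)"
    using A by (metis cong_sym cong_trans mult_zero_right)
  moreover have "coprime 2 (int p)"
  proof -
    have "odd p" using ph by simp
    then show ?thesis by (simp add: coprime_left_2_iff_odd)
  qed
  ultimately show ?thesis unfolding h_def by (metis cong_mult_lcancel)
qed

lemma prod_perturb:
  fixes a :: "nat \<Rightarrow> int" and c :: int
  assumes "finite A"
  shows "\<exists>R. (\<Prod>t\<in>A. a t + c) = (\<Prod>t\<in>A. a t) + c * (\<Sum>t\<in>A. \<Prod>s\<in>A-{t}. a s) + c^2 * R"
  using assms
proof (induction A rule: finite_induct)
  case empty
  then show ?case by simp
next
  case (insert x F)
  then obtain R where R: "(\<Prod>t\<in>F. a t + c) = (\<Prod>t\<in>F. a t) + c * (\<Sum>t\<in>F. \<Prod>s\<in>F-{t}. a s) + c^2 * R" by blast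
  define P where "P = (\<Prod>t\<in>F. a t)"
  define Q where "Q = (\<Sum>t\<in>F. \<Prod>s\<in>F-{t}. a s)"
  have s1: "(\<Sum>t\<in>insert x F. \<Prod>s\<in>insert x F-{t}. a s) = P + a x * Q"
  proof -
    have "(\<Sum>t\<in>insert x F. \<Prod>s\<in>insert x F-{t}. a s) = (\<Prod>s\<in>insert x F-{x}. a s) + (\<Sum>t\<in>F. \<Prod>s\<in>insert x F-{t}. a s)"
      using insert by (simp add: sum.insert)
    also have "(\<Prod>s\<in>insert x F-{x}. a s) = P" unfolding P_def using insert by (simp add: insert_Diff_if)
    also have "(\<Sum>t\<in>F. \<Prod>s\<in>insert x F-{t}. a s) = (\<Sum>t\<in>F. a x * (\<Prod>s\<in>F-{t}. a s))"
    proof (rule sum.cong[OF refl])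
      fix t assume "t \<in> F"
      then have "insert x F - {t} = insert x (F - {t})" using insert by auto
      then show "(\<Prod>s\<in>insert x F-{t}. a s) = a x * (\<Prod>s\<in>F-{t}. a s)" using insert by simp
    qed
    finally show ?thesis by (simp add: Q_def sum_distrib_left)
  qed
  have "(\<Prod>t\<in>insert x F. a t + c) = (a x + c) * (P + c * Q + c^2 * R)"
    using insert R by (simp add: P_def Q_def)
  also have "\<dots> = a x * P + c * (P + a x * Q) + c^2 * (Q + (a x + c) * R)"
    by (simp add: algebra_simps power2_eq_square)
  finally show ?case using insert s1 by (auto simp: P_def)
qed

lemma p3_aux:
  fixes p :: nat and X :: int
  assumes "int p dvd X"
  shows "int p ^ 3 dvd int p^2 * X"
  using assms by (metis mult_dvd_mono dvd_refl power2_eq_square power3_eq_cube mult.assoc)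

lemma ringid1: "(P::int) * (x * y) = - (- x * P) * y" by simp

lemma Q_dvd:
  fixes p :: nat
  assumes "prime p" "p > 3"
  shows "int p dvd (\<Sum>t\<in>{1..(p-1) div 2}. \<Prod>s\<in>{1..(p-1) div 2}-{t}. int p * int s - int s^2)"
proof -
  define h where "h = (p-1) div 2"
  have ph: "p = 2*h+1" unfolding h_def by (rule p_odd_h[OF assms])
  define G where "G = (\<Prod>s\<in>{1..h}. - (int s^2))"
  have A: "[(\<Sum>t\<in>{1..h}. \<Prod>s\<in>{1..h}-{t}. int p * int s - int s^2) = (\<Sum>t\<in>{1..h}. - G * int t^(p-3))] (mod int p)"
  proof (rule cong_sum)
    fix t assume t: "t \<in> {1..h}"
    define P2 where "P2 = (\<Prod>s\<in>{1..h}-{t}. - (int s^2))"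
    have c1: "[(\<Prod>s\<in>{1..h}-{t}. int p * int s - int s^2) = P2] (mod int p)"
      unfolding P2_def by (rule cong_prod) (simp add: cong_iff_dvd_diff)
    have c2: "[P2 * int t ^ (p - 1) = P2 * 1] (mod int p)"
      by (rule cong_scalar_left, rule fermat_int[OF assms(1)]) (use t ph in \<open>auto dest: dvd_imp_le\<close>)
    have pw: "int t ^ (p - 1) = int t^2 * int t^(p-3)"
    proof -
      have "p - 1 = 2 + (p - 3)" using assms by simp
      then show ?thesis by (simp only: power_add)
    qed
    have G: "G = - (int t^2) * P2"
      unfolding G_def P2_def using t by (simp add: prod.remove)
    have e: "P2 * int t ^ (p - 1) = - G * int t^(p-3)"
      unfolding pw G by (rule ringid1)
    have "[P2 = - G * int t^(p-3)] (mod int p)"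
      using cong_sym[OF c2] unfolding e by simp
    then show "[(\<Prod>s\<in>{1..h}-{t}. int p * int s - int s^2) = - G * int t^(p-3)] (mod int p)"
      by (rule cong_trans[OF c1])
  qed
  have B: "(\<Sum>t\<in>{1..h}. - G * int t^(p-3)) = - G * (\<Sum>t\<in>{1..h}. int t^(p-3))"
    by (rule sum_distrib_left[symmetric])
  have C: "[- G * (\<Sum>t\<in>{1..h}. int t^(p-3)) = - G * 0] (mod int p)"
    by (rule cong_scalar_left) (use halfsum_zero[OF assms] in \<open>simp only: h_def\<close>)
  have "[(\<Sum>t\<in>{1..h}. \<Prod>s\<in>{1..h}-{t}. int p * int s - int s^2) = - G * 0] (mod int p)"
    using cong_trans[OF A[unfolded B] C] .
  then show ?thesis unfolding h_def by (simp add: cong_0_iff)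
qed

lemma cong_aux3:
  fixes L F X Y m :: int
  assumes "L = F + X + Y" "m dvd X" "m dvd Y"
  shows "[L = F] (mod m)"
proof -
  have "L - F = X + Y" using assms(1) by simp
  then show ?thesis using assms(2,3) by (simp add: cong_iff_dvd_diff)
qed

lemma W3:
  fixes p j :: nat
  assumes "prime p" "p > 3"
  shows "[(\<Prod>t\<in>{1..p-1}. int (j*p) + int t) = fact (p-1)] (mod (int p ^ 3))"
proof -
  define h where "h = (p-1) div 2"
  have ph: "p = 2*h+1" unfolding h_def by (rule p_odd_h[OF assms])
  define a where "a t = int p * int t - int t^2" for t
  define c where "c = int (j*(j+1)) * int p^2"
  have pair: "\<And>J. (\<Prod>t\<in>{1..p-1}. int (J*p) + int t) = (\<Prod>t\<in>{1..h}. a t + int (J*(J+1)) * int p^2)"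
  proof -
    fix J
    have "(\<Prod>t\<in>{1..p-1}. int (J*p) + int t) = (\<Prod>t\<in>{1..h}. (int (J*p) + int t) * (int (J*p) + int (p - t)))"
      by (rule prod_split_half[OF ph])
    also have "\<dots> = (\<Prod>t\<in>{1..h}. a t + int (J*(J+1)) * int p^2)"
    proof (rule prod.cong[OF refl])
      fix t assume "t \<in> {1..h}"
      then have "int (p - t) = int p - int t" using ph by auto
      then show "(int (J*p) + int t) * (int (J*p) + int (p - t)) = a t + int (J*(J+1)) * int p^2"
        by (simp add: a_def algebra_simps power2_eq_square)
    qed
    finally show "(\<Prod>t\<in>{1..p-1}. int (J*p) + int t) = (\<Prod>t\<in>{1..h}. a t + int (J*(J+1)) * int p^2)" .
  qed
  have B0: "(\<Prod>t\<in>{1..h}. a t) = fact (p - 1)"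
    using pair[of 0] by (simp add: fact_prod)
  obtain R where R: "(\<Prod>t\<in>{1..h}. a t + c) = (\<Prod>t\<in>{1..h}. a t) + c * (\<Sum>t\<in>{1..h}. \<Prod>s\<in>{1..h}-{t}. a s) + c^2 * R"
    using prod_perturb[of "{1..h}" a c] by auto
  have Qd: "int p dvd (\<Sum>t\<in>{1..h}. \<Prod>s\<in>{1..h}-{t}. a s)"
    using Q_dvd[OF assms] unfolding a_def h_def .
  have d1: "int p^3 dvd c * (\<Sum>t\<in>{1..h}. \<Prod>s\<in>{1..h}-{t}. a s)"
  proof -
    have e: "c * (\<Sum>t\<in>{1..h}. \<Prod>s\<in>{1..h}-{t}. a s) = (int p^2 * (\<Sum>t\<in>{1..h}. \<Prod>s\<in>{1..h}-{t}. a s)) * int (j*(j+1))"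
      unfolding c_def by (simp only: ac_simps)
    show ?thesis unfolding e by (rule dvd_mult2[OF p3_aux[OF Qd]])
  qed
  have d2: "int p^3 dvd c^2 * R"
  proof -
    have e: "c^2 * R = int p^3 * (int p * int (j*(j+1))^2 * R)" by (simp add: c_def power2_eq_square power3_eq_cube)
    show ?thesis unfolding e by (rule dvd_triv_left)
  qed
  have "(\<Prod>t\<in>{1..p-1}. int (j*p) + int t) = (\<Prod>t\<in>{1..h}. a t + c)" unfolding c_def by (rule pair)
  also have "\<dots> = (\<Prod>t\<in>{1..h}. a t) + c * (\<Sum>t\<in>{1..h}. \<Prod>s\<in>{1..h}-{t}. a s) + c^2 * R" by (rule R)
  also have "(\<Prod>t\<in>{1..h}. a t) = fact (p-1)" by (rule B0)
  finally show ?thesis using d1 d2 by (rule cong_aux3)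
qed

definition Bp :: "nat \<Rightarrow> nat \<Rightarrow> nat" where "Bp p j = (\<Prod>t\<in>{1..p-1}. j*p + t)"
definition Vp :: "nat \<Rightarrow> nat \<Rightarrow> nat \<Rightarrow> nat" where
  "Vp p q s = (\<Prod>j<q. Bp p j) * (\<Prod>t\<in>{1..s}. q*p + t)"

lemma fact_shift: "fact (n + s) = (fact n :: nat) * (\<Prod>t\<in>{1..s}. n + t)"
proof (induction s)
  case 0
  then show ?case by simp
next
  case (Suc s)
  have "fact (n + Suc s) = (n + Suc s) * (fact (n + s) :: nat)" by simp
  also have "\<dots> = fact n * (\<Prod>t\<in>{1..Suc s}. n + t)"
    using Suc by (simp add: prod.cl_ivl_Suc algebra_simps)
  finally show ?case .
qed

lemma fact_block:
  assumes "p \<ge> 1"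
  shows "fact (q*p) = p^q * fact q * (\<Prod>j<q. Bp p j)"
proof (induction q)
  case 0
  then show ?case by simp
next
  case (Suc q)
  have "(\<Prod>t\<in>{1..p}. q*p + t) = Bp p q * (q*p + p)"
  proof -
    have "{1..p} = insert p {1..p-1}" using assms by auto
    then show ?thesis using assms by (simp add: Bp_def mult.commute)
  qed
  moreover have "fact (Suc q * p) = fact (q*p) * (\<Prod>t\<in>{1..p}. q*p + t)"
    using fact_shift[of "q*p" p] by (simp add: add.commute)
  ultimately have "fact (Suc q * p) = p^q * fact q * (\<Prod>j<q. Bp p j) * (Bp p q * ((q + 1) * p))"
    using Suc by (simp add: algebra_simps)
  then show ?case by (simp add: algebra_simps)
qed

lemma fact_decomp:
  assumes "p \<ge> 1"
  shows "fact (q*p + s) = p^q * fact q * Vp p q s"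
  using fact_shift[of "q*p" s] fact_block[OF assms, of q] by (simp add: Vp_def algebra_simps)

lemma Bp_mod_p:
  assumes "prime p"
  shows "[int (Bp p j) = -1] (mod int p)"
proof -
  have "[int (Bp p j) = (\<Prod>t\<in>{1..p-1}. int t)] (mod int p)"
    unfolding Bp_def of_nat_prod by (rule cong_prod) (simp add: cong_iff_dvd_diff)
  also have "(\<Prod>t\<in>{1..p-1}. int t) = fact (p - 1)" by (simp add: fact_prod)
  finally show ?thesis using wilson_theorem[OF assms] cong_trans by blast
qed

lemma Vp_mod_p:
  assumes "prime p"
  shows "[int (Vp p q s) = (-1)^q * fact s] (mod int p)"
proof -
  have "[int (Vp p q s) = (\<Prod>j<q. (-1::int)) * (\<Prod>t\<in>{1..s}. int t)] (mod int p)"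
    unfolding Vp_def of_nat_mult of_nat_prod
    by (intro cong_mult cong_prod Bp_mod_p[OF assms]) (simp add: cong_iff_dvd_diff)
  then show ?thesis by (simp add: fact_prod)
qed

lemma Bprod_mod_p3:
  assumes "prime p" "p > 3"
  shows "[int (\<Prod>j<q. Bp p j) = fact (p-1) ^ q] (mod (int p ^ 3))"
proof -
  have "[int (\<Prod>j<q. Bp p j) = (\<Prod>j<q. fact (p-1))] (mod (int p ^ 3))"
    unfolding of_nat_prod Bp_def of_nat_add of_nat_mult
    by (rule cong_prod) (use W3[OF assms] in simp)
  then show ?thesis by simp
qed

lemma coprime_p3:
  fixes x :: int
  assumes "prime p" "\<not> int p dvd x"
  shows "coprime x (int p ^ 3)"
proof -
  have "prime (int p)" using assms(1) by (simp add: prime_nat_int_transfer)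
  then show ?thesis using assms(2) prime_imp_power_coprime coprime_commute by blast
qed

lemma fact_not_dvd:
  assumes "prime p" "n < p"
  shows "\<not> int p dvd fact n"
proof
  assume "int p dvd fact n"
  then have "p dvd fact n" by (metis of_nat_dvd_iff of_nat_fact)
  then show False using prime_dvd_fact_iff[OF assms(1)] assms(2) by simp
qed

lemma wil_not_dvd:
  assumes "prime p"
  shows "\<not> int p dvd fact (p - 1)"
  by (rule fact_not_dvd[OF assms]) (use assms prime_gt_0_nat in auto)

lemma jacobsthal:
  assumes "prime p" "p > 3" "b \<le> a" "b < p" "a - b < p"
  shows "[int ((a*p) choose (b*p)) = int (a choose b)] (mod (int p ^ 3))"
proof -
  have p1: "p \<ge> 1" using assms by simp
  define X where "X q = (\<Prod>j<q. Bp p j)" for q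
  have "fact (b*p) * fact (a*p - b*p) * ((a*p) choose (b*p)) = fact (a*p)"
    using assms by (intro binomial_fact_lemma) simp
  moreover have "a*p - b*p = (a-b)*p" by (simp add: diff_mult_distrib)
  ultimately have "(p^b * fact b * X b) * (p^(a-b) * fact (a-b) * X (a-b)) * ((a*p) choose (b*p)) = p^a * fact a * X a"
    using fact_block[OF p1] unfolding X_def by metis
  moreover have "p^a = p^b * p^(a-b)" using assms by (simp add: power_add[symmetric])
  ultimately have "p^a * (fact b * fact (a-b) * X b * X (a-b) * ((a*p) choose (b*p))) = p^a * (fact a * X a)"
    by (simp add: algebra_simps)
  then have E: "fact b * fact (a-b) * X b * X (a-b) * ((a*p) choose (b*p)) = fact a * X a"
    using p1 by simp
  define W :: int where "W = fact (p-1)"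
  have "[int (fact b * fact (a-b) * X b * X (a-b) * ((a*p) choose (b*p))) = fact b * fact (a-b) * W^b * W^(a-b) * int ((a*p) choose (b*p))] (mod (int p ^ 3))"
    unfolding of_nat_mult W_def X_def of_nat_fact
    by (intro cong_mult cong_refl Bprod_mod_p3[OF assms(1,2)])
  moreover have "[int (fact a * X a) = fact a * W^a] (mod (int p ^ 3))"
    unfolding of_nat_mult W_def X_def of_nat_fact
    by (intro cong_mult cong_refl Bprod_mod_p3[OF assms(1,2)])
  ultimately have "[fact b * fact (a-b) * W^b * W^(a-b) * int ((a*p) choose (b*p)) = fact a * W^a] (mod (int p ^ 3))"
    using E by (metis cong_sym cong_trans)
  moreover have "fact b * fact (a-b) * W^b * W^(a-b) * int ((a*p) choose (b*p)) = (int ((a*p) choose (b*p)) * (fact b * fact (a-b))) * W^a"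
  proof -
    have "W^a = W^b * W^(a-b)" using assms by (simp add: power_add[symmetric])
    then show ?thesis by (simp only: ac_simps)
  qed
  moreover have "fact a * W^a = (int (a choose b) * (fact b * fact (a-b))) * W^a"
  proof -
    have "(fact a :: int) = fact b * fact (a-b) * int (a choose b)"
      using binomial_fact_lemma[OF assms(3)] by (metis of_nat_fact of_nat_mult)
    then show ?thesis by (simp only: ac_simps)
  qed
  ultimately have "[(int ((a*p) choose (b*p)) * (fact b * fact (a-b))) * W^a = (int (a choose b) * (fact b * fact (a-b))) * W^a] (mod (int p ^ 3))"
    by simp
  moreover have "coprime (W^a) (int p ^ 3)"
  proof -
    have "coprime W (int p ^ 3)" unfolding W_def by (rule coprime_p3[OF assms(1) wil_not_dvd[OF assms(1)]])
    then show ?thesis by simp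
  qed
  ultimately have "[int ((a*p) choose (b*p)) * (fact b * fact (a-b)) = int (a choose b) * (fact b * fact (a-b))] (mod (int p ^ 3))"
    using cong_mult_rcancel by blast
  moreover have "coprime (fact b * fact (a-b) :: int) (int p ^ 3)"
  proof -
    have "\<not> int p dvd fact b * fact (a-b)"
    proof
      assume "int p dvd fact b * fact (a-b)"
      moreover have "prime (int p)" using assms(1) by (simp add: prime_nat_int_transfer)
      ultimately have "int p dvd fact b \<or> int p dvd fact (a-b)" using prime_dvd_mult_iff by blast
      then show False using fact_not_dvd[OF assms(1)] assms by blast
    qed
    then show ?thesis by (rule coprime_p3[OF assms(1)])
  qed
  ultimately show ?thesis using cong_mult_rcancel by blast
qed

definition tt :: "nat \<Rightarrow> nat \<Rightarrow> int" where
  "tt n k = int (n choose k) * int ((2*k) choose k) * int ((2*(n-k)) choose (n-k))"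

lemma termG_exact:
  fixes p N i i' r :: nat
  assumes p1: "p \<ge> 1" and N: "N = i + i' + 1" and r: "1 \<le> r" "2*r < p"
  defines "k \<equiv> i*p + r"
  shows "tt (N*p) k * int (fact i^3 * fact i'^3 * Vp p i r ^ 3 * Vp p i' (p - r) ^ 3)
       = int p^2 * int (fact N * fact (2*i) * fact (2*i'+1) * Vp p N 0 * Vp p (2*i) (2*r) * Vp p (2*i'+1) (p - 2*r))"
proof -
  define C1 where "C1 = (N*p) choose k"
  define C2 where "C2 = (2*k) choose k"
  define C3 where "C3 = (2*(N*p-k)) choose (N*p-k)"
  define V1 where "V1 = Vp p i r"
  define V2 where "V2 = Vp p i' (p - r)"
  define Vn where "Vn = Vp p N 0"
  define V3 where "V3 = Vp p (2*i) (2*r)"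
  define V4 where "V4 = Vp p (2*i'+1) (p - 2*r)"
  have nk: "N*p - k = i'*p + (p - r)"
  proof -
    have "N*p = k + (i'*p + (p - r))" using r unfolding N k_def by (simp add: algebra_simps)
    then show ?thesis by simp
  qed
  have k2: "2*k = (2*i)*p + 2*r" unfolding k_def by simp
  have nk2: "2*(N*p - k) = (2*i'+1)*p + (p - 2*r)" unfolding nk using r by (simp add: algebra_simps)
  have fk: "fact k = p^i * fact i * V1" unfolding k_def V1_def by (rule fact_decomp[OF p1])
  have fnk: "fact (N*p - k) = p^i' * fact i' * V2" unfolding nk V2_def by (rule fact_decomp[OF p1])
  have fn: "fact (N*p) = p^N * fact N * Vn" unfolding Vn_def using fact_decomp[OF p1, of N 0] by simp
  have f2k: "fact (2*k) = p^(2*i) * fact (2*i) * V3" unfolding k2 V3_def by (rule fact_decomp[OF p1])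
  have f2nk: "fact (2*(N*p-k)) = p^(2*i'+1) * fact (2*i'+1) * V4" unfolding nk2 V4_def by (rule fact_decomp[OF p1])
  have kle: "k \<le> N*p" using nk r by (simp add: k_def N algebra_simps)
  have b1: "fact k * fact (N*p - k) * C1 = fact (N*p)" unfolding C1_def by (rule binomial_fact_lemma[OF kle])
  have b2: "fact k * fact k * C2 = fact (2*k)" unfolding C2_def using binomial_fact_lemma[of k "2*k"] by simp
  have b3: "fact (N*p-k) * fact (N*p-k) * C3 = fact (2*(N*p-k))" unfolding C3_def using binomial_fact_lemma[of "N*p-k" "2*(N*p-k)"] by simp
  have pp: "p^i * p^i' > 0" using p1 by simp
  have e1: "fact i * V1 * fact i' * V2 * C1 = p * fact N * Vn"
  proof -
    have "(p^i * p^i') * (fact i * V1 * fact i' * V2 * C1) = (p^i * p^i') * (p * fact N * Vn)"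
    proof -
      have pN: "p^N = p^i * p^i' * p" by (simp add: N power_add)
      show ?thesis using b1 unfolding fk fnk fn pN by (simp add: ac_simps)
    qed
    then show ?thesis using pp p1 by simp
  qed
  have e2: "fact i ^ 2 * V1^2 * C2 = fact (2*i) * V3"
  proof -
    have p2i: "p^(2*i) = p^i * p^i" by (simp add: mult_2 power_add)
    have "(p^i * p^i) * (fact i ^ 2 * V1^2 * C2) = (p^i * p^i) * (fact (2*i) * V3)"
      using b2 unfolding fk f2k p2i by (simp add: power2_eq_square ac_simps)
    then show ?thesis using p1 by simp
  qed
  have e3: "fact i' ^ 2 * V2^2 * C3 = p * fact (2*i'+1) * V4"
  proof -
    have p2i: "p^(2*i'+1) = p^i' * p^i' * p" by (simp add: mult_2 power_add)
    have "(p^i' * p^i') * (fact i' ^ 2 * V2^2 * C3) = (p^i' * p^i') * (p * fact (2*i'+1) * V4)"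
      using b3 unfolding fnk f2nk p2i by (simp add: power2_eq_square ac_simps)
    then show ?thesis using p1 by simp
  qed
  have "(C1 * C2 * C3) * (fact i^3 * fact i'^3 * V1^3 * V2^3) = (fact i * V1 * fact i' * V2 * C1) * (fact i ^ 2 * V1^2 * C2) * (fact i' ^ 2 * V2^2 * C3)"
    by (simp add: power2_eq_square power3_eq_cube ac_simps)
  also have "\<dots> = (p * fact N * Vn) * (fact (2*i) * V3) * (p * fact (2*i'+1) * V4)" unfolding e1 e2 e3 ..
  also have "\<dots> = p^2 * (fact N * fact (2*i) * fact (2*i'+1) * Vn * V3 * V4)"
    by (simp add: power2_eq_square ac_simps)
  finally have "int ((C1 * C2 * C3) * (fact i^3 * fact i'^3 * V1^3 * V2^3)) = int (p^2 * (fact N * fact (2*i) * fact (2*i'+1) * Vn * V3 * V4))"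
    by simp
  then show ?thesis unfolding tt_def C1_def C2_def C3_def V1_def V2_def Vn_def V3_def V4_def
    by (simp only: of_nat_mult of_nat_power)
qed

lemma neg1_par: "even (a + b) \<Longrightarrow> (-1::int)^a = (-1)^b"
  by (cases "even a") (auto simp: minus_one_power_iff)

lemma cong_p2_lift:
  fixes p :: nat and a b :: int
  assumes "[a = b] (mod int p)"
  shows "[int p^2 * a = int p^2 * b] (mod (int p ^ 3))"
proof -
  have "[int p^2 * a = int p^2 * b] (mod (int p^2 * int p))" by (rule cong_cmult_leftI[OF assms])
  then show ?thesis by (simp add: power2_eq_square power3_eq_cube ac_simps)
qed

lemma sgn3: "(x::int)^(r + 3*(i+j+r)) = x^r * (x^i * x^j * x^r)^3"
proof -
  have a: "x^(r + 3*(i+j+r)) = x^r * x^(3*(i+j+r))" by (rule power_add)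
  have b: "x^(3*(i+j+r)) = (x^(i+j+r))^3" by (metis power_mult mult.commute)
  have c: "x^(i+j+r) = x^i * x^j * x^r" by (simp only: power_add)
  show ?thesis by (simp only: a b c)
qed

lemma ring2: "y2 = y * x^2 \<Longrightarrow> 2*K*c*y*(a*b*(c*x))^3 = (2*K*(c*(a*b*c)^3)*x)*y2" for K c y a b x y2 :: int
  by (simp add: power2_eq_square power3_eq_cube ac_simps)

lemma termG:
  fixes p N i i' r :: nat
  assumes pr: "prime p" "p > 3" and N: "N = i + i' + 1" and r: "1 \<le> r" "2*r < p"
  shows "[tt (N*p) (i*p+r) * int (fact i^3 * fact i'^3) = int p^2 * (2 * int (fact N * fact (2*i) * fact (2*i'+1)) * (-1)^r * int r^(p-3))] (mod (int p ^ 3))"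
proof -
  have p1: "p \<ge> 1" using pr by simp
  define I where "I = int (fact i^3 * fact i'^3)"
  define K where "K = int (fact N * fact (2*i) * fact (2*i'+1))"
  define V1 where "V1 = int (Vp p i r)"
  define V2 where "V2 = int (Vp p i' (p - r))"
  define Vn where "Vn = int (Vp p N 0)"
  define V3 where "V3 = int (Vp p (2*i) (2*r))"
  define V4 where "V4 = int (Vp p (2*i'+1) (p - 2*r))"
  define T where "T = tt (N*p) (i*p+r)"
  have ex: "T * (I * (V1*V2)^3) = int p^2 * (K * Vn * V3 * V4)"
    using termG_exact[OF p1 N r] unfolding T_def I_def K_def V1_def V2_def Vn_def V3_def V4_def
    by (simp add: power_mult_distrib ac_simps)
  have v1: "[V1 = (-1)^i * fact r] (mod int p)" unfolding V1_def by (rule Vp_mod_p[OF pr(1)])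
  have v2: "[V2 = (-1)^i' * fact (p - r)] (mod int p)" unfolding V2_def by (rule Vp_mod_p[OF pr(1)])
  have vn: "[Vn = (-1)^N] (mod int p)" unfolding Vn_def using Vp_mod_p[OF pr(1), of N 0] by simp
  have v3: "[V3 = (-1)^(2*i) * fact (2*r)] (mod int p)" unfolding V3_def by (rule Vp_mod_p[OF pr(1)])
  have v4: "[V4 = (-1)^(2*i'+1) * fact (p - 2*r)] (mod int p)" unfolding V4_def by (rule Vp_mod_p[OF pr(1)])
  have w1: "[fact r * fact (p - r) = ((-1)^r * int r :: int)] (mod int p)"
    by (rule wil_refl[OF pr(1)]) (use r in auto)
  have w2: "[fact (2*r) * fact (p - 2*r) = ((-1)^(2*r) * int (2*r) :: int)] (mod int p)"
    by (rule wil_refl[OF pr(1)]) (use r in auto)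
  have fr: "[int r ^ (p - 1) = 1] (mod int p)"
    by (rule fermat_int[OF pr(1)]) (use r in \<open>auto dest: dvd_imp_le\<close>)
  have "[K * Vn * V3 * V4 = K * (-1)^N * ((-1)^(2*i) * fact (2*r)) * ((-1)^(2*i'+1) * fact (p - 2*r))] (mod int p)"
    by (intro cong_mult cong_refl vn v3 v4)
  also have "K * (-1)^N * ((-1)^(2*i) * fact (2*r)) * ((-1)^(2*i'+1) * fact (p - 2*r)) = (K * (-1)^N * (-1)^(2*i) * (-1)^(2*i'+1)) * (fact (2*r) * fact (p - 2*r))"
    by (simp only: ac_simps)
  also have "[\<dots> = (K * (-1)^N * (-1)^(2*i) * (-1)^(2*i'+1)) * ((-1)^(2*r) * int (2*r))] (mod int p)"
    by (intro cong_mult cong_refl w2)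
  also have "(K * (-1)^N * (-1)^(2*i) * (-1)^(2*i'+1)) * ((-1)^(2*r) * int (2*r)) = K * (2 * int r) * (-1)^(N + 2*i + (2*i'+1) + 2*r)"
    by (simp add: power_add)
  finally have L: "[K * Vn * V3 * V4 = K * (2 * int r) * (-1)^(N + 2*i + (2*i'+1) + 2*r)] (mod int p)" .
  have "[2 * K * (-1)^r * int r^(p-3) * (V1*V2)^3 = 2 * K * (-1)^r * int r^(p-3) * ((-1)^i * fact r * ((-1)^i' * fact (p - r)))^3] (mod int p)"
    by (intro cong_mult cong_refl cong_pow v1 v2)
  also have "2 * K * (-1)^r * int r^(p-3) * ((-1)^i * fact r * ((-1)^i' * fact (p - r)))^3 = 2 * K * (-1)^r * int r^(p-3) * ((-1)^i * (-1)^i' * (fact r * fact (p - r)))^3"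
    by (simp only: ac_simps)
  also have "[\<dots> = 2 * K * (-1)^r * int r^(p-3) * ((-1)^i * (-1)^i' * ((-1)^r * int r))^3] (mod int p)"
    by (intro cong_mult cong_refl cong_pow w1)
  also have "2 * K * (-1)^r * int r^(p-3) * ((-1)^i * (-1)^i' * ((-1)^r * int r))^3 = (2 * K * (-1)^(r + 3*(i + i' + r)) * int r) * int r^(p-1)"
  proof -
    have "p - 1 = (p - 3) + 2" using pr by simp
    then have "int r^(p-1) = int r^(p-3) * int r^2" by (simp only: power_add)
    then show ?thesis unfolding sgn3[of "-1" r i i'] by (rule ring2)
  qed
  also have "[\<dots> = (2 * K * (-1)^(r + 3*(i + i' + r)) * int r) * 1] (mod int p)"
    by (intro cong_mult cong_refl fr)
  finally have R: "[2 * K * (-1)^r * int r^(p-3) * (V1*V2)^3 = 2 * K * (-1)^(r + 3*(i + i' + r)) * int r] (mod int p)"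
    by simp
  have sgn: "(-1::int)^(N + 2*i + (2*i'+1) + 2*r) = (-1)^(r + 3*(i + i' + r))"
    by (rule neg1_par) (simp add: N)
  have LR: "[K * Vn * V3 * V4 = 2 * K * (-1)^r * int r^(p-3) * (V1*V2)^3] (mod int p)"
  proof -
    have eqAB: "K * (2 * int r) * (-1)^(r + 3*(i + i' + r)) = 2 * K * (-1)^(r + 3*(i + i' + r)) * int r"
      by (simp only: ac_simps)
    show ?thesis using cong_trans[OF L[unfolded sgn eqAB] cong_sym[OF R]] .
  qed
  have "[T * I * (V1*V2)^3 = int p^2 * (2 * K * (-1)^r * int r^(p-3)) * (V1*V2)^3] (mod (int p ^ 3))"
  proof -
    have "T * I * (V1*V2)^3 = int p^2 * (K * Vn * V3 * V4)" using ex by (simp add: ac_simps)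
    moreover have "[int p^2 * (K * Vn * V3 * V4) = int p^2 * (2 * K * (-1)^r * int r^(p-3) * (V1*V2)^3)] (mod (int p ^ 3))"
      by (rule cong_p2_lift[OF LR])
    ultimately show ?thesis by (simp add: ac_simps)
  qed
  moreover have "coprime ((V1*V2)^3) (int p ^ 3)"
  proof -
    have "\<not> int p dvd V1 * V2"
    proof
      assume d: "int p dvd V1 * V2"
      have "[V1 * V2 = (-1)^i * fact r * ((-1)^i' * fact (p - r))] (mod int p)" by (intro cong_mult v1 v2)
      also have "(-1)^i * fact r * ((-1)^i' * fact (p - r)) = (-1)^i * (-1)^i' * (fact r * fact (p - r) :: int)" by (simp only: ac_simps)
      also have "[\<dots> = (-1)^i * (-1)^i' * ((-1)^r * int r)] (mod int p)" by (intro cong_mult cong_refl w1)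
      finally have "[V1 * V2 = (-1)^(i+i'+r) * int r] (mod int p)" by (simp add: power_add ac_simps)
      with d have "int p dvd (-1)^(i+i'+r) * int r" by (simp add: cong_dvd_iff)
      then have "int p dvd int r" by (simp add: minus_one_power_iff split: if_splits)
      then have "p dvd r" by simp
      then show False using r by (auto dest: dvd_imp_le)
    qed
    then have "coprime (V1*V2) (int p ^ 3)" by (rule coprime_p3[OF pr(1)])
    then show ?thesis by simp
  qed
  ultimately have "[T * I = int p^2 * (2 * K * (-1)^r * int r^(p-3))] (mod (int p ^ 3))"
    using cong_mult_rcancel by blast
  then show ?thesis unfolding T_def I_def K_def by (simp add: ac_simps)
qed

lemma telescope_alt:
  fixes x :: "nat \<Rightarrow> int"
  shows "(\<Sum>j<m. (-1)^j * (x (Suc j) + x j)) = x 0 - (-1)^m * x m"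
  by (induction m) (simp_all add: algebra_simps)

lemma sum_even_odd:
  fixes g :: "nat \<Rightarrow> int"
  shows "(\<Sum>i\<le>2*m. g i) = (\<Sum>l\<le>m. g (2*l)) + (\<Sum>l<m. g (2*l+1))"
proof (induction m)
  case 0
  then show ?case by simp
next
  case (Suc m)
  have "(\<Sum>i\<le>2*Suc m. g i) = (\<Sum>i\<le>2*m. g i) + g (2*m+1) + g (2*m+2)"
    by (simp add: numeral_2_eq_2)
  then show ?case using Suc by (simp add: numeral_2_eq_2 algebra_simps)
qed

lemma alt_sum_odd: "(\<Sum>j<2*h+1. (-1::int)^j) = 1"
  by (induction h) (simp_all add: numeral_2_eq_2)

definition Aq :: "nat \<Rightarrow> nat \<Rightarrow> int" where
  "Aq p n = (\<Sum>j<p. (-1)^j * int (2*j+1)^n)"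

lemma A_rec:
  fixes p m :: nat
  assumes "odd p" "m \<ge> 1"
  shows "(\<Sum>l\<le>m. int ((2*m) choose (2*l)) * Aq p (2*l)) = 2^(2*m-1) * int p^(2*m)"
proof -
  define n where "n = 2*m"
  have "(\<Sum>j<p. (-1)^j * (int (2*Suc j)^n + int (2*j)^n)) = int (2*0)^n - (-1)^p * int (2*p)^n"
    by (rule telescope_alt[of "\<lambda>j. int (2*j)^n"])
  also have "\<dots> = int (2*p)^n" using assms by (simp add: n_def)
  finally have tel: "(\<Sum>j<p. (-1)^j * (int (2*Suc j)^n + int (2*j)^n)) = int (2*p)^n" .
  have "(\<Sum>j<p. (-1)^j * (int (2*Suc j)^n + int (2*j)^n))
      = (\<Sum>j<p. (-1)^j * (\<Sum>i\<le>n. int (n choose i) * int (2*j+1)^i * (1 + (-1)^(n-i))))"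
  proof (rule sum.cong[OF refl])
    fix j
    have e1: "int (2*Suc j)^n = (\<Sum>i\<le>n. int (n choose i) * int (2*j+1)^i * 1^(n-i))"
      using binomial_ring[of "int (2*j+1)" 1 n] by simp
    have e2: "int (2*j)^n = (\<Sum>i\<le>n. int (n choose i) * int (2*j+1)^i * (-1)^(n-i))"
      using binomial_ring[of "int (2*j+1)" "-1" n] by simp
    show "(-1)^j * (int (2*Suc j)^n + int (2*j)^n) = (-1)^j * (\<Sum>i\<le>n. int (n choose i) * int (2*j+1)^i * (1 + (-1)^(n-i)))"
      unfolding e1 e2 by (simp add: sum.distrib[symmetric] algebra_simps)
  qed
  also have "\<dots> = (\<Sum>i\<le>n. int (n choose i) * (1 + (-1)^(n-i)) * Aq p i)"
    unfolding Aq_def by (simp add: sum_distrib_left sum_distrib_right sum.swap[of _ "{..<p}"] ac_simps)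
  also have "\<dots> = (\<Sum>l\<le>m. int (n choose (2*l)) * (1 + (-1)^(n-2*l)) * Aq p (2*l)) + (\<Sum>l<m. int (n choose (2*l+1)) * (1 + (-1)^(n-(2*l+1))) * Aq p (2*l+1))"
    unfolding n_def by (rule sum_even_odd)
  also have "(\<Sum>l<m. int (n choose (2*l+1)) * (1 + (-1)^(n-(2*l+1))) * Aq p (2*l+1)) = 0"
  proof (rule sum.neutral, rule ballI)
    fix l assume "l \<in> {..<m}"
    then have "odd (n - (2*l+1))" unfolding n_def by auto
    then show "int (n choose (2*l+1)) * (1 + (-1)^(n-(2*l+1))) * Aq p (2*l+1) = 0" by simp
  qed
  also have "(\<Sum>l\<le>m. int (n choose (2*l)) * (1 + (-1)^(n-2*l)) * Aq p (2*l)) = 2 * (\<Sum>l\<le>m. int (n choose (2*l)) * Aq p (2*l))"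
  proof -
    have "\<And>l. l \<in> {..m} \<Longrightarrow> even (n - 2*l)" unfolding n_def by auto
    then have "(\<Sum>l\<le>m. int (n choose (2*l)) * (1 + (-1)^(n-2*l)) * Aq p (2*l)) = (\<Sum>l\<le>m. 2 * (int (n choose (2*l)) * Aq p (2*l)))"
      by (intro sum.cong) auto
    then show ?thesis by (simp add: sum_distrib_left)
  qed
  finally have "2 * (\<Sum>l\<le>m. int (n choose (2*l)) * Aq p (2*l)) = int (2*p)^n" using tel by simp
  moreover have "int (2*p)^n = 2 * (2^(2*m-1) * int p^(2*m))"
  proof -
    have "(2::int)^n = 2 * 2^(2*m-1)" using assms unfolding n_def by (cases m) auto
    then show ?thesis unfolding n_def by (simp add: power_mult_distrib n_def)
  qed
  ultimately have "(\<Sum>l\<le>m. int (n choose (2*l)) * Aq p (2*l)) = 2^(2*m-1) * int p^(2*m)"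
    by linarith
  then show ?thesis unfolding n_def .
qed

lemma A_E2:
  fixes p :: nat
  assumes "prime p" "odd p"
  shows "[Aq p (2*m) = E2 m] (mod int p)"
proof (induction m rule: less_induct)
  case (less m)
  show ?case
  proof (cases "m = 0")
    case True
    obtain h where h: "p = 2*h+1" using assms(2) oddE by blast
    have "Aq p 0 = 1" unfolding Aq_def h using alt_sum_odd by simp
    moreover have "E2 0 = 1" by simp
    ultimately show ?thesis using True by simp
  next
    case False
    then have m1: "m \<ge> 1" by simp
    have rec: "(\<Sum>l\<le>m. int ((2*m) choose (2*l)) * Aq p (2*l)) = 2^(2*m-1) * int p^(2*m)"
      by (rule A_rec[OF assms(2) m1])
    have "(\<Sum>l\<le>m. int ((2*m) choose (2*l)) * Aq p (2*l)) = (\<Sum>l<m. int ((2*m) choose (2*l)) * Aq p (2*l)) + Aq p (2*m)"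
      by (simp add: lessThan_Suc_atMost[symmetric])
    with rec have Aeq: "Aq p (2*m) = 2^(2*m-1) * int p^(2*m) - (\<Sum>l<m. int ((2*m) choose (2*l)) * Aq p (2*l))"
      by simp
    have E: "E2 m = - (\<Sum>l<m. int ((2*m) choose (2*l)) * E2 l)"
      using False by (subst E2.simps) simp
    have c1: "[2^(2*m-1) * int p^(2*m) = 0] (mod int p)"
    proof -
      have "int p dvd int p^(2*m)" using m1 by simp
      then show ?thesis by (simp add: cong_0_iff)
    qed
    have c2: "[(\<Sum>l<m. int ((2*m) choose (2*l)) * Aq p (2*l)) = (\<Sum>l<m. int ((2*m) choose (2*l)) * E2 l)] (mod int p)"
      by (intro cong_sum cong_mult cong_refl less.IH) simp
    have "[Aq p (2*m) = 0 - (\<Sum>l<m. int ((2*m) choose (2*l)) * E2 l)] (mod int p)"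
      unfolding Aeq by (intro cong_diff c1 c2)
    then show ?thesis unfolding E by simp
  qed
qed

lemma sym_split:
  fixes f :: "nat \<Rightarrow> int"
  shows "(\<Sum>j<2*h+1. f j) = f h + (\<Sum>r\<in>{1..h}. f (h - r) + f (h + r))"
proof -
  have U: "{..<2*h+1} = {..<h} \<union> ({h} \<union> {h+1..2*h})" by auto
  have "(\<Sum>j<2*h+1. f j) = (\<Sum>j<h. f j) + (f h + (\<Sum>j\<in>{h+1..2*h}. f j))"
    unfolding U by (subst sum.union_disjoint, auto)+
  moreover have "(\<Sum>j<h. f j) = (\<Sum>r\<in>{1..h}. f (h - r))"
    by (rule sum.reindex_bij_witness[of _ "\<lambda>r. h - r" "\<lambda>j. h - j"]) auto
  moreover have "(\<Sum>j\<in>{h+1..2*h}. f j) = (\<Sum>r\<in>{1..h}. f (h + r))"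
    by (rule sum.reindex_bij_witness[of _ "\<lambda>r. h + r" "\<lambda>j. j - h"]) auto
  ultimately show ?thesis by (simp add: sum.distrib)
qed

definition Tp :: "nat \<Rightarrow> int" where
  "Tp p = (\<Sum>r\<in>{1..(p-1) div 2}. (-1)^r * int r^(p-3))"

lemma ring3: "t2 = 2*t3 \<Longrightarrow> (a*b)*(t3*y) + (a*b)*(t3*y) = t2 * a * (b*y)" for t2 t3 a b y :: int
  by (simp add: algebra_simps)

lemma A_T:
  fixes p :: nat
  assumes "prime p" "p > 3"
  shows "[Aq p (p-3) = 2^(p-2) * (-1)^((p-1) div 2) * Tp p] (mod int p)"
proof -
  define h where "h = (p-1) div 2"
  have ph: "p = 2*h+1" unfolding h_def by (rule p_odd_h[OF assms])
  have ev: "even (p-3)" using ph by presburger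
  define f where "f j = (-1)^j * int (2*j+1)^(p-3)" for j
  have EA: "Aq p (p-3) = f h + (\<Sum>r\<in>{1..h}. f (h - r) + f (h + r))"
    unfolding Aq_def f_def using sym_split[of "\<lambda>j. (-1)^j * int (2*j+1)^(p-3)" h] ph by simp
  have C0: "[f h = 0] (mod int p)"
  proof -
    have "int (2*h+1)^(p-3) = int p * int p^(p-4)"
    proof -
      have "p - 3 = Suc (p - 4)" using assms by simp
      then show ?thesis using ph by simp
    qed
    then show ?thesis unfolding f_def by (simp add: cong_0_iff)
  qed
  have CS: "[(\<Sum>r\<in>{1..h}. f (h - r) + f (h + r)) = (\<Sum>r\<in>{1..h}. 2^(p-2) * (-1)^h * ((-1)^r * int r^(p-3)))] (mod int p)"
  proof (rule cong_sum)
    fix r assume r: "r \<in> {1..h}"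
    have s: "(-1::int)^(h-r) = (-1)^(h+r)" by (rule neg1_par) (use r in auto)
    have a: "int (2*(h-r)+1) = int p - 2 * int r" using r ph by auto
    have b: "int (2*(h+r)+1) = int p + 2 * int r" using ph by auto
    have c1: "[int (2*(h-r)+1)^(p-3) = (- (2 * int r))^(p-3)] (mod int p)"
      unfolding a by (rule cong_pow) (simp add: cong_iff_dvd_diff)
    have c2: "[int (2*(h+r)+1)^(p-3) = (2 * int r)^(p-3)] (mod int p)"
      unfolding b by (rule cong_pow) (simp add: cong_iff_dvd_diff)
    have C: "[f (h - r) + f (h + r) = (-1)^(h+r) * (2 * int r)^(p-3) + (-1)^(h+r) * (2 * int r)^(p-3)] (mod int p)"
      unfolding f_def s using c1 c2 ev by (intro cong_add cong_mult cong_refl) simp_all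
    have Eq: "(-1)^(h+r) * (2 * int r)^(p-3) + (-1)^(h+r) * (2 * int r)^(p-3) = 2^(p-2) * (-1)^h * ((-1)^r * int r^(p-3))"
    proof -
      have "p - 2 = Suc (p - 3)" using assms by simp
      then have "(2::int)^(p-2) = 2 * 2^(p-3)" by simp
      then show ?thesis unfolding power_add power_mult_distrib by (rule ring3)
    qed
    show "[f (h - r) + f (h + r) = 2^(p-2) * (-1)^h * ((-1)^r * int r^(p-3))] (mod int p)" using C unfolding Eq .
  qed
  have "[Aq p (p-3) = 0 + (\<Sum>r\<in>{1..h}. 2^(p-2) * (-1)^h * ((-1)^r * int r^(p-3)))] (mod int p)"
    unfolding EA by (rule cong_add[OF C0 CS])
  moreover have "(\<Sum>r\<in>{1..h}. 2^(p-2) * (-1)^h * ((-1)^r * int r^(p-3))) = 2^(p-2) * (-1)^h * (\<Sum>r\<in>{1..h}. (-1)^r * int r^(p-3))"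
    by (rule sum_distrib_left[symmetric])
  ultimately show ?thesis unfolding Tp_def h_def by simp
qed

lemma T_E:
  fixes p :: nat
  assumes "prime p" "p > 3"
  shows "[Tp p = 2 * (-1)^((p-1) div 2) * euler (p-3)] (mod int p)"
proof -
  define h where "h = (p-1) div 2"
  define s :: int where "s = (-1)^h"
  have ph: "p = 2*h+1" unfolding h_def by (rule p_odd_h[OF assms])
  have ev: "p - 3 = 2 * ((p-3) div 2)" using ph by presburger
  have eu: "euler (p-3) = E2 ((p-3) div 2)" unfolding euler_def using ev by presburger
  have AE: "[Aq p (p-3) = euler (p-3)] (mod int p)"
    unfolding eu using A_E2[OF assms(1), of "(p-3) div 2"] ph ev by simp
  have AT: "[Aq p (p-3) = 2^(p-2) * s * Tp p] (mod int p)" unfolding s_def h_def by (rule A_T[OF assms])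
  have c: "[2 * s * (2^(p-2) * s * Tp p) = 2 * s * euler (p-3)] (mod int p)"
    by (rule cong_scalar_left) (rule cong_trans[OF cong_sym[OF AT] AE])
  have ss: "s * s = 1" unfolding s_def by (simp add: power_add[symmetric] mult_2[symmetric] power_mult)
  have "2 * s * (2^(p-2) * s * Tp p) = 2^(p-1) * Tp p"
  proof -
    have "p - 1 = Suc (p - 2)" using assms by simp
    then have "(2::int)^(p-1) = 2 * 2^(p-2)" by simp
    then show ?thesis using ss by (simp add: algebra_simps)
  qed
  moreover have "[2^(p-1) * Tp p = 1 * Tp p] (mod int p)"
  proof (rule cong_scalar_right)
    have "\<not> p dvd 2" using assms by (auto dest: dvd_imp_le)
    then show "[2^(p-1) = (1::int)] (mod int p)" using fermat_int[OF assms(1), of 2] by simp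
  qed
  ultimately have "[Tp p = 2 * s * euler (p-3)] (mod int p)"
    using c by (metis cong_sym cong_trans mult_1)
  then show ?thesis unfolding s_def h_def .
qed

lemma sum_lessThan_add: "(\<Sum>k<m+n. g k) = (\<Sum>k<m. g k) + (\<Sum>r<n. g (m+r))" for g :: "nat \<Rightarrow> int"
  by (induction n) (simp_all add: add.assoc)

lemma block_sum: "(\<Sum>k<N*p. g k) = (\<Sum>i<N. \<Sum>r<p. g (i*p+r))" for g :: "nat \<Rightarrow> int"
proof (induction N)
  case 0
  then show ?case by simp
next
  case (Suc N)
  have "(\<Sum>k<Suc N*p. g k) = (\<Sum>k<N*p + p. g k)" by (simp add: add.commute)
  also have "\<dots> = (\<Sum>k<N*p. g k) + (\<Sum>r<p. g (N*p+r))" by (rule sum_lessThan_add)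
  finally show ?case using Suc by simp
qed

lemma sum_r_split: "p \<ge> 1 \<Longrightarrow> (\<Sum>r<p. g r) = g 0 + (\<Sum>r\<in>{1..p-1}. g r)" for g :: "nat \<Rightarrow> int"
proof -
  assume p: "p \<ge> 1"
  have "{..<p} = insert 0 {1..p-1}" using p by auto
  then show ?thesis by simp
qed

lemma S_tt: "S n = (\<Sum>k\<le>n. tt n k)"
  unfolding S_def tt_def by (intro sum.cong refl) (simp add: diff_mult_distrib2)

lemma tt_sym: "k \<le> n \<Longrightarrow> tt n (n - k) = tt n k"
  unfolding tt_def by (simp add: binomial_symmetric[symmetric] mult.commute)

lemma S_decomp:
  fixes p N :: nat
  assumes "prime p" "p > 3"
  shows "S (N*p) = (\<Sum>j\<le>N. tt (N*p) (j*p)) + 2 * (\<Sum>i<N. \<Sum>r\<in>{1..(p-1) div 2}. tt (N*p) (i*p+r))"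
proof -
  define h where "h = (p-1) div 2"
  have ph: "p = 2*h+1" unfolding h_def by (rule p_odd_h[OF assms])
  define g where "g = tt (N*p)"
  have "S (N*p) = (\<Sum>k<N*p. g k) + g (N*p)" unfolding S_tt g_def by (simp add: lessThan_Suc_atMost[symmetric])
  also have "(\<Sum>k<N*p. g k) = (\<Sum>i<N. g (i*p) + (\<Sum>r\<in>{1..p-1}. g (i*p+r)))"
    unfolding block_sum using sum_r_split[of p "\<lambda>r. g (i*p+r)" for i] ph by simp
  also have "\<dots> = (\<Sum>i<N. g (i*p)) + (\<Sum>i<N. \<Sum>r\<in>{1..h}. g (i*p+r) + g (i*p + (p - r)))"
    unfolding sum.distrib sum_split_half[OF ph] ..
  also have "(\<Sum>i<N. \<Sum>r\<in>{1..h}. g (i*p+r) + g (i*p + (p - r))) = (\<Sum>i<N. \<Sum>r\<in>{1..h}. g (i*p+r)) + (\<Sum>i<N. \<Sum>r\<in>{1..h}. g ((N - Suc i)*p+r))"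
  proof -
    have "\<And>i r. i < N \<Longrightarrow> r \<in> {1..h} \<Longrightarrow> g (i*p + (p - r)) = g ((N - Suc i)*p+r)"
    proof -
      fix i r assume i: "i < N" and r: "r \<in> {1..h}"
      have "N*p = (i*p + (p - r)) + ((N - Suc i)*p + r)"
      proof -
        have "N = i + 1 + (N - Suc i)" using i by simp
        then have "N*p = i*p + p + (N - Suc i)*p" by (metis add_mult_distrib mult_1)
        then show ?thesis using r ph by simp
      qed
      then have "i*p + (p - r) = N*p - ((N - Suc i)*p + r)" by simp
      moreover have "(N - Suc i)*p + r \<le> N*p" using \<open>N*p = _\<close> by simp
      ultimately show "g (i*p + (p - r)) = g ((N - Suc i)*p+r)" unfolding g_def using tt_sym by simp
    qed
    then have "(\<Sum>i<N. \<Sum>r\<in>{1..h}. g (i*p+r) + g (i*p + (p - r))) = (\<Sum>i<N. \<Sum>r\<in>{1..h}. g (i*p+r) + g ((N - Suc i)*p+r))"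
      by (intro sum.cong refl) auto
    also have "\<dots> = (\<Sum>i<N. \<Sum>r\<in>{1..h}. g (i*p+r)) + (\<Sum>i<N. \<Sum>r\<in>{1..h}. g ((N - Suc i)*p+r))"
      by (simp add: sum.distrib)
    finally show ?thesis .
  qed
  also have "(\<Sum>i<N. \<Sum>r\<in>{1..h}. g ((N - Suc i)*p+r)) = (\<Sum>i<N. \<Sum>r\<in>{1..h}. g (i*p+r))"
    by (rule sum.nat_diff_reindex)
  finally show ?thesis unfolding g_def h_def by (simp add: lessThan_Suc_atMost[symmetric])
qed

lemma mult_terms:
  fixes p N j :: nat
  assumes "prime p" "p > 3" "N < p" "j \<le> N"
  shows "[tt (N*p) (j*p) = tt N j] (mod (int p ^ 3))"
proof -
  have e1: "2*(j*p) = (2*j)*p" by simp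
  have e2: "N*p - j*p = (N-j)*p" by (simp add: diff_mult_distrib)
  have e3: "2*((N-j)*p) = (2*(N-j))*p" by simp
  have c1: "[int ((N*p) choose (j*p)) = int (N choose j)] (mod (int p ^ 3))"
    by (rule jacobsthal) (use assms in auto)
  have c2: "[int (((2*j)*p) choose (j*p)) = int ((2*j) choose j)] (mod (int p ^ 3))"
    by (rule jacobsthal) (use assms in auto)
  have c3: "[int (((2*(N-j))*p) choose ((N-j)*p)) = int ((2*(N-j)) choose (N-j))] (mod (int p ^ 3))"
    by (rule jacobsthal) (use assms in auto)
  show ?thesis unfolding tt_def e1 e2 e3 by (intro cong_mult c1 c2 c3)
qed

lemma nonmult_terms:
  fixes p N i i' :: nat and c :: int
  assumes pr: "prime p" "p > 3" and N: "N = i + i' + 1" and ip: "i < p" "i' < p"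
    and c: "c * int (fact i^3 * fact i'^3) = 2 * int (fact N * fact (2*i) * fact (2*i'+1))"
  shows "[(\<Sum>r\<in>{1..(p-1) div 2}. tt (N*p) (i*p+r)) = int p^2 * c * Tp p] (mod (int p ^ 3))"
proof -
  define I where "I = int (fact i^3 * fact i'^3)"
  have cop: "coprime I (int p ^ 3)"
  proof -
    have "\<not> int p dvd I"
    proof
      assume "int p dvd I"
      then have "int p dvd fact i ^ 3 * fact i' ^ 3" unfolding I_def by simp
      moreover have "prime (int p)" using pr(1) by (simp add: prime_nat_int_transfer)
      ultimately have "int p dvd fact i \<or> int p dvd fact i'"
        using prime_dvd_mult_iff prime_dvd_power by metis
      then show False using fact_not_dvd[OF pr(1)] ip by blast
    qed
    then show ?thesis by (rule coprime_p3[OF pr(1)])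
  qed
  have "[(\<Sum>r\<in>{1..(p-1) div 2}. tt (N*p) (i*p+r)) * I = (\<Sum>r\<in>{1..(p-1) div 2}. int p^2 * c * ((-1)^r * int r^(p-3))) * I] (mod (int p ^ 3))"
    unfolding sum_distrib_right
  proof (rule cong_sum)
    fix r assume r: "r \<in> {1..(p-1) div 2}"
    have "2*r < p" using r p_odd_h[OF pr] by auto
    then have C1: "[tt (N*p) (i*p+r) * I = int p^2 * (2 * int (fact N * fact (2*i) * fact (2*i'+1)) * (-1)^r * int r^(p-3))] (mod (int p ^ 3))"
      unfolding I_def using termG[OF pr N, of r] r by auto
    have E: "int p^2 * (2 * int (fact N * fact (2*i) * fact (2*i'+1)) * (-1)^r * int r^(p-3)) = int p^2 * c * ((-1)^r * int r^(p-3)) * I"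
      unfolding I_def c[symmetric] by (simp only: ac_simps)
    show "[tt (N*p) (i*p+r) * I = int p^2 * c * ((-1)^r * int r^(p-3)) * I] (mod (int p ^ 3))"
      using C1 unfolding E .
  qed
  then have "[(\<Sum>r\<in>{1..(p-1) div 2}. tt (N*p) (i*p+r)) = (\<Sum>r\<in>{1..(p-1) div 2}. int p^2 * c * ((-1)^r * int r^(p-3)))] (mod (int p ^ 3))"
    using cong_mult_rcancel[OF cop] by blast
  moreover have "(\<Sum>r\<in>{1..(p-1) div 2}. int p^2 * c * ((-1)^r * int r^(p-3))) = int p^2 * c * Tp p"
    unfolding Tp_def by (rule sum_distrib_left[symmetric])
  ultimately show ?thesis by simp
qed

lemma S_final:
  fixes p N :: nat and c :: "nat \<Rightarrow> int"
  assumes pr: "prime p" "p > 3" and Np: "N < p"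
    and c: "\<And>i. i < N \<Longrightarrow> c i * int (fact i^3 * fact (N-1-i)^3) = 2 * int (fact N * fact (2*i) * fact (2*(N-1-i)+1))"
  shows "[S (N*p) = S N + 2 * int p^2 * (\<Sum>i<N. c i) * Tp p] (mod (int p ^ 3))"
proof -
  have m: "[(\<Sum>j\<le>N. tt (N*p) (j*p)) = S N] (mod (int p ^ 3))"
    unfolding S_tt by (intro cong_sum mult_terms[OF pr Np]) simp
  have n: "[(\<Sum>i<N. \<Sum>r\<in>{1..(p-1) div 2}. tt (N*p) (i*p+r)) = (\<Sum>i<N. int p^2 * c i * Tp p)] (mod (int p ^ 3))"
  proof (rule cong_sum)
    fix i assume i: "i \<in> {..<N}"
    then have N: "N = i + (N-1-i) + 1" by auto
    show "[(\<Sum>r\<in>{1..(p-1) div 2}. tt (N*p) (i*p+r)) = int p^2 * c i * Tp p] (mod (int p ^ 3))"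
      by (rule nonmult_terms[OF pr N]) (use i Np c in auto)
  qed
  have "[S (N*p) = S N + 2 * (\<Sum>i<N. int p^2 * c i * Tp p)] (mod (int p ^ 3))"
    unfolding S_decomp[OF pr] by (intro cong_add cong_mult cong_refl m n)
  moreover have "2 * (\<Sum>i<N. int p^2 * c i * Tp p) = 2 * int p^2 * (\<Sum>i<N. c i) * Tp p"
    by (simp add: sum_distrib_left sum_distrib_right ac_simps)
  ultimately show ?thesis by simp
qed

theorem corollary3p1:
  fixes p :: nat
  assumes "prime p" and "p > 3"
  shows "[S p = 4 + 8 * (-1) ^ ((p - 1) div 2) * int p ^ 2 * euler (p - 3)] (mod (int p ^ 3)) \<and>
         [S (2*p) = 20 + 128 * (-1) ^ ((p - 1) div 2) * int p ^ 2 * euler (p - 3)] (mod (int p ^ 3)) \<and>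
         [S (3*p) = 112 + 1440 * (-1) ^ ((p - 1) div 2) * int p ^ 2 * euler (p - 3)] (mod (int p ^ 3))"
proof -
  define s :: int where "s = (-1) ^ ((p - 1) div 2)"
  define E where "E = euler (p - 3)"
  have TE: "[Tp p = 2 * s * E] (mod int p)" unfolding s_def E_def by (rule T_E[OF assms])
  have lift: "\<And>a::int. [int p^2 * a * Tp p = 2 * a * s * int p^2 * E] (mod (int p ^ 3))"
  proof -
    fix a :: int
    have "[int p^2 * (a * Tp p) = int p^2 * (a * (2 * s * E))] (mod (int p ^ 3))"
      by (rule cong_p2_lift, rule cong_scalar_left, rule TE)
    then show "[int p^2 * a * Tp p = 2 * a * s * int p^2 * E] (mod (int p ^ 3))" by (simp add: ac_simps)
  qed
  have S1: "S 1 = 4" by (simp add: S_def)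
  have S2: "S 2 = 20" by (simp add: S_def numeral_eq_Suc)
  have S3: "S 3 = 112" by (simp add: S_def numeral_eq_Suc)
  have p1: "[S (1*p) = S 1 + 2 * int p^2 * (\<Sum>i<(1::nat). (\<lambda>i. 2) i) * Tp p] (mod (int p ^ 3))"
  proof (rule S_final[OF assms])
    show "1 < p" using assms by simp
  next
    fix i :: nat assume "i < 1"
    then show "2 * int (fact i ^ 3 * fact (1 - 1 - i) ^ 3) = 2 * int (fact 1 * fact (2 * i) * fact (2 * (1 - 1 - i) + 1))"
      by auto
  qed
  have p2: "[S (2*p) = S 2 + 2 * int p^2 * (\<Sum>i<(2::nat). (\<lambda>i. if i = 0 then 24 else 8) i) * Tp p] (mod (int p ^ 3))"
  proof (rule S_final[OF assms])
    show "2 < p" using assms by simp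
  next
    fix i :: nat assume "i < 2"
    then have "i = 0 \<or> i = 1" by auto
    then show "(if i = 0 then 24 else 8) * int (fact i ^ 3 * fact (2 - 1 - i) ^ 3) = 2 * int (fact 2 * fact (2 * i) * fact (2 * (2 - 1 - i) + 1))"
      by (auto simp: fact_numeral)
  qed
  have p3: "[S (3*p) = S 3 + 2 * int p^2 * (\<Sum>i<(3::nat). (\<lambda>i. if i = 0 then 180 else if i = 1 then 144 else 36) i) * Tp p] (mod (int p ^ 3))"
  proof (rule S_final[OF assms])
    show "3 < p" using assms by simp
  next
    fix i :: nat assume "i < 3"
    then have "i = 0 \<or> i = 1 \<or> i = 2" by auto
    then show "(if i = 0 then 180 else if i = 1 then 144 else 36) * int (fact i ^ 3 * fact (3 - 1 - i) ^ 3) = 2 * int (fact 3 * fact (2 * i) * fact (2 * (3 - 1 - i) + 1))"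
      by (auto simp: fact_numeral)
  qed
  have r1: "[S p = 4 + 8 * s * int p ^ 2 * E] (mod (int p ^ 3))"
  proof -
    have "[S p = 4 + int p^2 * 4 * Tp p] (mod (int p ^ 3))" using p1 S1 by (simp add: ac_simps)
    also have "[4 + int p^2 * 4 * Tp p = 4 + 2 * 4 * s * int p^2 * E] (mod (int p ^ 3))"
      by (intro cong_add cong_refl lift)
    finally show ?thesis by (simp add: ac_simps)
  qed
  have r2: "[S (2*p) = 20 + 128 * s * int p ^ 2 * E] (mod (int p ^ 3))"
  proof -
    have "[S (2*p) = 20 + int p^2 * 64 * Tp p] (mod (int p ^ 3))" using p2 S2 by (simp add: ac_simps numeral_eq_Suc)
    also have "[20 + int p^2 * 64 * Tp p = 20 + 2 * 64 * s * int p^2 * E] (mod (int p ^ 3))"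
      by (intro cong_add cong_refl lift)
    finally show ?thesis by (simp add: ac_simps)
  qed
  have r3: "[S (3*p) = 112 + 1440 * s * int p ^ 2 * E] (mod (int p ^ 3))"
  proof -
    have "[S (3*p) = 112 + int p^2 * 720 * Tp p] (mod (int p ^ 3))" using p3 S3 by (simp add: ac_simps numeral_eq_Suc)
    also have "[112 + int p^2 * 720 * Tp p = 112 + 2 * 720 * s * int p^2 * E] (mod (int p ^ 3))"
      by (intro cong_add cong_refl lift)
    finally show ?thesis by (simp add: ac_simps)
  qed
  show ?thesis using r1 r2 r3 unfolding s_def E_def by blast
qed

end
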